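(* Let $M$ be a finite monoid and $A$ a finite subset of $M$ with $A\cap U(M)\neq\emptyset$, where $U(M)$ is the set of invertible elements of $M$. Let $V=\mathbb{C}\langle\overline{A}\rangle\subseteq\mathbb{C}[M]$. Then for every $0<\lambda\leq1$, the unique atom $\mathcal{H}_\lambda$ of $V$ containing $1$ is a subalgebra of $\mathbb{C}[M]$ which contains $\mathcal{H}_l(A):=\{x\in\mathbb{C}[M]\mid x\overline{A}\subseteq\mathbb{C}\langle\overline{A}\rangle\}$ and satisfies $|BA|\geq|A|+\lambda|B|-\lambda\dim_{\mathbb{C}}(\mathcal{H}_\lambda)$ and $\dim_{\mathbb{C}}(\mathcal{H}_\lambda)\geq|H_A|$ for every finite subset $B$ of $M$ with $B\cap U(M)\neq\emptyset$. In particular $|BA|\geq|A|+|B|-\dim_{\mathbb{C}}(\mathcal{H}_1)$ and $\dim_{\mathbb{C}}(\mathcal{H}_1)\geq|H_A|$.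
   Context: $\mathbb{C}[M]$ is the monoid algebra with basis $\{e_g\mid g\in M\}$ and $e_ge_{g'}=e_{gg'}$; for $S\subseteq M$, $\overline{S}=\{e_s\mid s\in S\}$, and $\mathbb{C}\langle\cdot\rangle$ is linear span. $BA=\{ba\mid b\in B,a\in A\}\subseteq M$. $H_A=\{h\in M\mid hA=A\}$. Connectivity relative to $V$ and $\lambda$: for a finite-dimensional subspace $W\subseteq\mathbb{C}[M]$, $c(W)=\dim_{\mathbb{C}}\mathbb{C}\langle WV\rangle-\lambda\dim_{\mathbb{C}}W$ where $WV=\{wv\}$; $\kappa$ is the infimum of $c(W)$ over subspaces $W$ containing an invertible element of $\mathbb{C}[M]$; a fragment is such a $W$ with $c(W)=\kappa$; an atom is a fragment of minimal dimension (there is a unique atom containing $1$). *)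

theory Defs
  imports Complex_Main "HOL-Library.Function_Algebras"
begin

text \<open>The monoid algebra C[M] of a finite monoid M, realised as the functions
  M \<Rightarrow> complex (coefficient vectors w.r.t. the basis e_g), with pointwise addition
  and complex scalar multiplication, and convolution product.\<close>

definition cscale :: "complex \<Rightarrow> ('a \<Rightarrow> complex) \<Rightarrow> 'a \<Rightarrow> complex" where
  "cscale c f = (\<lambda>x. c * f x)"

interpretation cf: vector_space "cscale :: complex \<Rightarrow> ('a \<Rightarrow> complex) \<Rightarrow> 'a \<Rightarrow> complex"
  by unfold_locales (auto simp: cscale_def algebra_simps)

definition basis_el :: "'m \<Rightarrow> 'm \<Rightarrow> complex" where
  "basis_el g = (\<lambda>h. if h = g then 1 else 0)"

text \<open>multiplication in C[M]: e_g e_g' = e_{gg'}, extended bilinearly\<close>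
definition malg_mult :: "('m::{monoid_mult,finite} \<Rightarrow> complex) \<Rightarrow> ('m \<Rightarrow> complex) \<Rightarrow> 'm \<Rightarrow> complex" where
  "malg_mult x y = (\<lambda>g. \<Sum>p\<in>{p. fst p * snd p = g}. x (fst p) * y (snd p))"

definition malg_one :: "'m::{monoid_mult,finite} \<Rightarrow> complex" where
  "malg_one = basis_el 1"

definition malg_invertible :: "('m::{monoid_mult,finite} \<Rightarrow> complex) \<Rightarrow> bool" where
  "malg_invertible x \<longleftrightarrow> (\<exists>y. malg_mult x y = malg_one \<and> malg_mult y x = malg_one)"

definition units_M :: "'m::monoid_mult set" where
  "units_M = {u. \<exists>v. u * v = 1 \<and> v * u = 1}"

definition setprod :: "'m::monoid_mult set \<Rightarrow> 'm set \<Rightarrow> 'm set" where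
  "setprod B A = {b * a | b a. b \<in> B \<and> a \<in> A}"

definition stab_left :: "'m::monoid_mult set \<Rightarrow> 'm set" where
  "stab_left A = {h. (\<lambda>a. h * a) ` A = A}"

definition subsp_prod :: "('m::{monoid_mult,finite} \<Rightarrow> complex) set \<Rightarrow> ('m \<Rightarrow> complex) set \<Rightarrow> ('m \<Rightarrow> complex) set" where
  "subsp_prod W V = {malg_mult w v | w v. w \<in> W \<and> v \<in> V}"

definition conn :: "('m::{monoid_mult,finite} \<Rightarrow> complex) set \<Rightarrow> real \<Rightarrow> ('m \<Rightarrow> complex) set \<Rightarrow> real" where
  "conn V lam W = real (cf.dim (cf.span (subsp_prod W V))) - lam * real (cf.dim W)"

text \<open>admissible W: subspace containing an invertible element
  (finite-dimensionality is automatic since C[M] is finite-dimensional)\<close>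
definition admissible :: "('m::{monoid_mult,finite} \<Rightarrow> complex) set \<Rightarrow> bool" where
  "admissible W \<longleftrightarrow> cf.subspace W \<and> (\<exists>x\<in>W. malg_invertible x)"

definition kappa :: "('m::{monoid_mult,finite} \<Rightarrow> complex) set \<Rightarrow> real \<Rightarrow> real" where
  "kappa V lam = Inf {conn V lam W | W. admissible W}"

definition fragment :: "('m::{monoid_mult,finite} \<Rightarrow> complex) set \<Rightarrow> real \<Rightarrow> ('m \<Rightarrow> complex) set \<Rightarrow> bool" where
  "fragment V lam W \<longleftrightarrow> admissible W \<and> conn V lam W = kappa V lam"

definition atom :: "('m::{monoid_mult,finite} \<Rightarrow> complex) set \<Rightarrow> real \<Rightarrow> ('m \<Rightarrow> complex) set \<Rightarrow> bool" where
  "atom V lam W \<longleftrightarrow> fragment V lam W \<and>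
     (\<forall>W'. fragment V lam W' \<longrightarrow> cf.dim W \<le> cf.dim W')"

definition subalgebra :: "('m::{monoid_mult,finite} \<Rightarrow> complex) set \<Rightarrow> bool" where
  "subalgebra H \<longleftrightarrow> cf.subspace H \<and> malg_one \<in> H \<and>
     (\<forall>x\<in>H. \<forall>y\<in>H. malg_mult x y \<in> H)"

definition Hl :: "'m::{monoid_mult,finite} set \<Rightarrow> ('m \<Rightarrow> complex) set" where
  "Hl A = {x. \<forall>a\<in>A. malg_mult x (basis_el a) \<in> cf.span (basis_el ` A)}"

end

theory Submission
  imports Defs
begin

lemma sum_fun_apply: "(\<Sum>x\<in>S. f x) g = (\<Sum>x\<in>S. f x g)"
  by (induction S rule: infinite_finite_induct) auto

lemma ifsum: "(if P then sum f A else 0) = sum (\<lambda>x. if P then f x else 0) A"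
  by simp

lemma swap4: "(\<Sum>c\<in>C. \<Sum>d\<in>D. \<Sum>a\<in>A. \<Sum>b\<in>B. F c d a b) = (\<Sum>a\<in>A. \<Sum>b\<in>B. \<Sum>d\<in>D. \<Sum>c\<in>C. F c d a b)"
proof -
  have "(\<Sum>c\<in>C. \<Sum>d\<in>D. \<Sum>a\<in>A. \<Sum>b\<in>B. F c d a b) = (\<Sum>c\<in>C. \<Sum>a\<in>A. \<Sum>d\<in>D. \<Sum>b\<in>B. F c d a b)"
    by (rule sum.cong[OF refl], rule sum.swap)
  also have "\<dots> = (\<Sum>c\<in>C. \<Sum>a\<in>A. \<Sum>b\<in>B. \<Sum>d\<in>D. F c d a b)"
    by (rule sum.cong[OF refl], rule sum.cong[OF refl], rule sum.swap)
  also have "\<dots> = (\<Sum>a\<in>A. \<Sum>c\<in>C. \<Sum>b\<in>B. \<Sum>d\<in>D. F c d a b)"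
    by (rule sum.swap)
  also have "\<dots> = (\<Sum>a\<in>A. \<Sum>b\<in>B. \<Sum>c\<in>C. \<Sum>d\<in>D. F c d a b)"
    by (rule sum.cong[OF refl], rule sum.swap)
  also have "\<dots> = (\<Sum>a\<in>A. \<Sum>b\<in>B. \<Sum>d\<in>D. \<Sum>c\<in>C. F c d a b)"
    by (rule sum.cong[OF refl], rule sum.cong[OF refl], rule sum.swap)
  finally show ?thesis .
qed

lemma swap_in: "(\<Sum>a\<in>A. \<Sum>c\<in>C. \<Sum>b\<in>B. \<Sum>d\<in>D. F a c b d) = (\<Sum>a\<in>A. \<Sum>b\<in>B. \<Sum>d\<in>D. \<Sum>c\<in>C. F a c b d)"
proof -
  have "\<And>a. (\<Sum>c\<in>C. \<Sum>b\<in>B. \<Sum>d\<in>D. F a c b d) = (\<Sum>b\<in>B. \<Sum>d\<in>D. \<Sum>c\<in>C. F a c b d)"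
  proof -
    fix a
    have "(\<Sum>c\<in>C. \<Sum>b\<in>B. \<Sum>d\<in>D. F a c b d) = (\<Sum>b\<in>B. \<Sum>c\<in>C. \<Sum>d\<in>D. F a c b d)"
      by (rule sum.swap)
    also have "\<dots> = (\<Sum>b\<in>B. \<Sum>d\<in>D. \<Sum>c\<in>C. F a c b d)"
      by (rule sum.cong[OF refl], rule sum.swap)
    finally show "?thesis a" .
  qed
  then show ?thesis by simp
qed

lemma collapse1: "(\<Sum>c\<in>(UNIV::'a::{finite,times} set). if a * b = c \<and> c * d = g then X else 0) = (if a * b * d = g then X else (0::complex))"
proof -
  have "(\<lambda>c. if a * b = c \<and> c * d = g then X else 0) = (\<lambda>c. if c = a * b then (if a * b * d = g then X else 0) else 0)"
    by auto
  then show ?thesis by (simp only:) simp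
qed

lemma collapse2: "(\<Sum>c\<in>(UNIV::'a::{finite,semigroup_mult} set). if b * d = c \<and> a * c = g then X else 0) = (if a * b * d = g then X else (0::complex))"
proof -
  have "(\<lambda>c. if b * d = c \<and> a * c = g then X else 0) = (\<lambda>c. if c = b * d then (if a * b * d = g then X else 0) else 0)"
    by (auto simp: mult.assoc)
  then show ?thesis by (simp only:) simp
qed

lemma malg_alt: "malg_mult x y g = (\<Sum>a\<in>UNIV. \<Sum>b\<in>UNIV. if a * b = g then x a * y b else 0)"
proof -
  have "malg_mult x y g = (\<Sum>p\<in>{p\<in>UNIV. fst p * snd p = g}. x (fst p) * y (snd p))"
    by (simp add: malg_mult_def)
  also have "\<dots> = (\<Sum>p\<in>UNIV. if fst p * snd p = g then x (fst p) * y (snd p) else 0)"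
    by (rule sum.inter_filter) simp
  also have "\<dots> = (\<Sum>p\<in>UNIV \<times> UNIV. if fst p * snd p = g then x (fst p) * y (snd p) else 0)"
    by simp
  also have "\<dots> = (\<Sum>a\<in>UNIV. \<Sum>b\<in>UNIV. if a * b = g then x a * y b else 0)"
    by (subst sum.cartesian_product) (simp add: case_prod_beta)
  finally show ?thesis .
qed

lemma malg_assoc: "malg_mult (malg_mult x y) z = malg_mult x (malg_mult y z)"
proof
  fix g
  have "malg_mult (malg_mult x y) z g = (\<Sum>c\<in>UNIV. \<Sum>d\<in>UNIV. if c * d = g then (\<Sum>a\<in>UNIV. \<Sum>b\<in>UNIV. if a * b = c then x a * y b else 0) * z d else 0)"
    by (simp only: malg_alt[of "malg_mult x y" z g] malg_alt[of x y])
  also have "\<dots> = (\<Sum>c\<in>UNIV. \<Sum>d\<in>UNIV. \<Sum>a\<in>UNIV. \<Sum>b\<in>UNIV. if a * b = c \<and> c * d = g then x a * y b * z d else 0)"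
    by (intro sum.cong refl) (auto simp: sum_distrib_right intro!: sum.cong)
  also have "\<dots> = (\<Sum>a\<in>UNIV. \<Sum>b\<in>UNIV. \<Sum>d\<in>UNIV. \<Sum>c\<in>UNIV. if a * b = c \<and> c * d = g then x a * y b * z d else 0)"
    by (rule swap4)
  also have "\<dots> = (\<Sum>a\<in>UNIV. \<Sum>b\<in>UNIV. \<Sum>d\<in>UNIV. if a * b * d = g then x a * y b * z d else 0)"
    by (simp only: collapse1)
  finally have L: "malg_mult (malg_mult x y) z g = \<dots>" .
  have "malg_mult x (malg_mult y z) g = (\<Sum>a\<in>UNIV. \<Sum>c\<in>UNIV. if a * c = g then x a * (\<Sum>b\<in>UNIV. \<Sum>d\<in>UNIV. if b * d = c then y b * z d else 0) else 0)"
    by (simp only: malg_alt[of x "malg_mult y z" g] malg_alt[of y z])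
  also have "\<dots> = (\<Sum>a\<in>UNIV. \<Sum>c\<in>UNIV. \<Sum>b\<in>UNIV. \<Sum>d\<in>UNIV. if b * d = c \<and> a * c = g then x a * y b * z d else 0)"
    by (intro sum.cong refl) (auto simp: sum_distrib_left mult.assoc intro!: sum.cong)
  also have "\<dots> = (\<Sum>a\<in>UNIV. \<Sum>b\<in>UNIV. \<Sum>d\<in>UNIV. \<Sum>c\<in>UNIV. if b * d = c \<and> a * c = g then x a * y b * z d else 0)"
    by (rule swap_in)
  also have "\<dots> = (\<Sum>a\<in>UNIV. \<Sum>b\<in>UNIV. \<Sum>d\<in>UNIV. if a * b * d = g then x a * y b * z d else 0)"
    by (simp only: collapse2)
  finally show "malg_mult (malg_mult x y) z g = malg_mult x (malg_mult y z) g" using L by simp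
qed

lemma vs: "vector_space (cscale :: complex \<Rightarrow> ('a \<Rightarrow> complex) \<Rightarrow> 'a \<Rightarrow> complex)"
  by unfold_locales (auto simp: cscale_def algebra_simps)

lemma malg_add_left: "malg_mult (x + y) z = malg_mult x z + malg_mult y z"
  by (rule ext) (simp add: malg_mult_def sum.distrib distrib_right)

lemma malg_add_right: "malg_mult z (x + y) = malg_mult z x + malg_mult z y"
  by (rule ext) (simp add: malg_mult_def sum.distrib distrib_left)

lemma malg_scale_left: "malg_mult (cscale c x) z = cscale c (malg_mult x z)"
  by (rule ext) (simp add: malg_mult_def cscale_def sum_distrib_left mult.assoc)

lemma malg_scale_right: "malg_mult z (cscale c x) = cscale c (malg_mult z x)"
  by (rule ext) (simp add: malg_mult_def cscale_def sum_distrib_left mult.assoc mult.left_commute)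

lemma lin_left: "Vector_Spaces.linear cscale cscale (\<lambda>x. malg_mult x z)"
  using vs by (simp add: Vector_Spaces.linear_iff malg_add_left malg_scale_left)

lemma lin_right: "Vector_Spaces.linear cscale cscale (\<lambda>x. malg_mult z x)"
  using vs by (simp add: Vector_Spaces.linear_iff malg_add_right malg_scale_right)

lemma basis_mult: "malg_mult (basis_el a) (basis_el b) = basis_el (a * b)"
proof
  fix g
  have e: "(\<lambda>a'. \<Sum>b'\<in>UNIV. if a' * b' = g then basis_el a a' * basis_el b b' else 0)
     = (\<lambda>a'. if a' = a then (\<Sum>b'\<in>UNIV. if b' = b then basis_el (a * b) g else 0) else 0)"
    proof (rule ext)
    fix a' show "(\<Sum>b'\<in>UNIV. if a' * b' = g then basis_el a a' * basis_el b b' else 0) = (if a' = a then (\<Sum>b'\<in>UNIV. if b' = b then basis_el (a * b) g else 0) else 0)"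
    proof (cases "a' = a")
      case True
      show ?thesis by (subst if_P[OF True], rule sum.cong[OF refl]) (auto simp: True basis_el_def)
    next
      case False
      then show ?thesis by (auto simp: basis_el_def intro!: sum.neutral)
    qed
  qed
  show "malg_mult (basis_el a) (basis_el b) g = basis_el (a * b) g"
    by (simp only: malg_alt e) simp
qed

lemma one_left: "malg_mult malg_one y = y"
proof
  fix g
  have e: "(\<lambda>a. \<Sum>b\<in>UNIV. if a * b = g then malg_one a * y b else 0)
     = (\<lambda>a. if a = 1 then (\<Sum>b\<in>UNIV. if b = g then y g else 0) else 0)" (is "(\<lambda>a. \<Sum>b\<in>UNIV. if a * b = g then ?L a b else 0) = (\<lambda>a. ?R a)")
    proof (rule ext)
    fix a show "(\<Sum>b\<in>UNIV. if a * b = g then ?L a b else 0) = ?R a"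
    proof (cases "a = 1")
      case True
      show ?thesis by (subst if_P[OF True], rule sum.cong[OF refl]) (auto simp: True basis_el_def malg_one_def)
    next
      case False
      then show ?thesis by (auto simp: basis_el_def malg_one_def intro!: sum.neutral)
    qed
  qed
  show "malg_mult malg_one y g = y g"
    by (simp only: malg_alt e) simp
qed

lemma one_right: fixes y :: "'m::{monoid_mult,finite} \<Rightarrow> complex" shows "malg_mult y malg_one = y"
proof
  fix g
  have e: "(\<lambda>a. \<Sum>b\<in>UNIV. if a * b = g then y a * malg_one b else 0)
     = (\<lambda>a. if a = g then (\<Sum>b\<in>UNIV. if b = (1::'m) then y g else 0) else 0)" (is "(\<lambda>a. \<Sum>b\<in>UNIV. if a * b = g then ?L a b else 0) = (\<lambda>a. ?R a)")
    proof (rule ext)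
    fix a show "(\<Sum>b\<in>UNIV. if a * b = g then ?L a b else 0) = ?R a"
    proof (cases "a = g")
      case True
      show ?thesis unfolding True if_P[OF refl] by (rule sum.cong[OF refl]) (auto simp: basis_el_def malg_one_def)
    next
      case False
      then show ?thesis by (auto simp: basis_el_def malg_one_def intro!: sum.neutral)
    qed
  qed
  show "malg_mult y malg_one g = y g"
    by (simp only: malg_alt e) simp
qed

lemma basis_inj: "inj basis_el"
proof (rule injI)
  fix a b :: 'a assume "basis_el a = basis_el b"
  then have "basis_el a a = basis_el b a" by simp
  then show "a = b" by (simp add: basis_el_def split: if_splits)
qed

lemma indep_basis: "cf.independent (basis_el ` S)"
  unfolding cf.independent_explicit_module
proof (intro allI impI)
  fix t u v
  assume t: "finite t" "t \<subseteq> basis_el ` S" and s: "(\<Sum>v\<in>t. cscale (u v) v) = 0" and v: "v \<in> t"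
  obtain g where g: "v = basis_el g" using t v by auto
  have "0 = (\<Sum>w\<in>t. cscale (u w) w) g" using s by simp
  also have "\<dots> = (\<Sum>w\<in>t. if w = v then u v else 0)"
  proof (simp only: sum_fun_apply, intro sum.cong refl)
    fix w assume "w \<in> t"
    then obtain h where h: "w = basis_el h" using t by auto
    show "cscale (u w) w g = (if w = v then u v else 0)"
      unfolding h g by (simp add: inj_eq[OF basis_inj]) (auto simp: cscale_def basis_el_def)
  qed
  also have "\<dots> = u v" using t v by simp
  finally show "u v = 0" by simp
qed

lemma delta_mult: "(\<Sum>g\<in>UNIV. f g * (if (x::_::finite) = g then 1 else 0)) = (f x :: complex)"
proof -
  have "(\<lambda>g. f g * (if x = g then 1 else 0)) = (\<lambda>g. if g = x then f x else 0)" by auto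
  then show ?thesis by (simp only:) simp
qed

lemma span_basis_all: "cf.span (range (basis_el :: 'a::finite \<Rightarrow> _)) = UNIV"
proof -
  have "f \<in> cf.span (range basis_el)" for f :: "'a::finite \<Rightarrow> complex"
  proof -
    have "f = (\<Sum>g\<in>UNIV. cscale (f g) (basis_el g))"
      by (rule ext) (simp add: sum_fun_apply cscale_def basis_el_def delta_mult)
    also have "\<dots> \<in> cf.span (range basis_el)"
      by (intro cf.span_sum cf.span_scale cf.span_base) auto
    finally show ?thesis .
  qed
  then show ?thesis by auto
qed

interpretation fd: finite_dimensional_vector_space "cscale :: complex \<Rightarrow> ('a::finite \<Rightarrow> complex) \<Rightarrow> 'a \<Rightarrow> complex" "range basis_el"
  by unfold_locales (auto simp: indep_basis span_basis_all)

lemma dim_basis: "cf.dim (cf.span (basis_el ` S)) = card S"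
proof -
  have "card (basis_el ` S) = card S" by (rule card_image, rule inj_on_subset[OF basis_inj], simp)
  then show ?thesis using cf.dim_span_eq_card_independent[OF indep_basis[of S]] by simp
qed

lemma malg_zero_right: "malg_mult z 0 = 0"
  by (rule ext) (simp add: malg_mult_def)

lemma malg_zero_left: "malg_mult 0 z = 0"
  by (rule ext) (simp add: malg_mult_def)

lemma malg_diff_right: "malg_mult z (x - y) = malg_mult z x - malg_mult z y"
  by (rule ext) (simp add: malg_mult_def sum_subtractf right_diff_distrib)

lemma sub_pre_right: "cf.subspace S \<Longrightarrow> cf.subspace {v. malg_mult p v \<in> S}"
  unfolding cf.subspace_def by (simp add: malg_zero_right malg_add_right malg_scale_right)

lemma sub_pre_left: "cf.subspace S \<Longrightarrow> cf.subspace {w. malg_mult w v \<in> S}"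
  unfolding cf.subspace_def by (simp add: malg_zero_left malg_add_left malg_scale_left)

lemma prod_span: "subsp_prod (cf.span P) (cf.span Q) \<subseteq> cf.span (subsp_prod P Q)"
proof
  fix u assume "u \<in> subsp_prod (cf.span P) (cf.span Q)"
  then obtain w v where u: "u = malg_mult w v" and w: "w \<in> cf.span P" and v: "v \<in> cf.span Q"
    by (auto simp: subsp_prod_def)
  have inner: "malg_mult p v \<in> cf.span (subsp_prod P Q)" if p: "p \<in> P" for p
  proof (rule cf.span_induct[OF v, where P="\<lambda>v. malg_mult p v \<in> cf.span (subsp_prod P Q)"])
    show "cf.subspace {v. malg_mult p v \<in> cf.span (subsp_prod P Q)}"
      by (rule sub_pre_right) simp
    fix q assume "q \<in> Q"
    then show "malg_mult p q \<in> cf.span (subsp_prod P Q)"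
      using p by (auto simp: subsp_prod_def intro!: cf.span_base)
  qed
  have "malg_mult w v \<in> cf.span (subsp_prod P Q)"
  proof (rule cf.span_induct[OF w, where P="\<lambda>w. malg_mult w v \<in> cf.span (subsp_prod P Q)"])
    show "cf.subspace {w. malg_mult w v \<in> cf.span (subsp_prod P Q)}"
      by (rule sub_pre_left) simp
  qed (rule inner)
  then show "u \<in> cf.span (subsp_prod P Q)" using u by simp
qed

lemma subsp_prod_mono: "P \<subseteq> P' \<Longrightarrow> Q \<subseteq> Q' \<Longrightarrow> subsp_prod P Q \<subseteq> subsp_prod P' Q'"
  by (auto simp: subsp_prod_def)

lemma span_prod_span: "cf.span (subsp_prod (cf.span P) (cf.span Q)) = cf.span (subsp_prod P Q)"
proof
  show "cf.span (subsp_prod (cf.span P) (cf.span Q)) \<subseteq> cf.span (subsp_prod P Q)"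
    by (rule cf.span_minimal[OF prod_span]) simp
  show "cf.span (subsp_prod P Q) \<subseteq> cf.span (subsp_prod (cf.span P) (cf.span Q))"
    by (intro cf.span_mono subsp_prod_mono cf.span_superset)
qed

lemma subsp_prod_Un: "subsp_prod (X \<union> Y) V = subsp_prod X V \<union> subsp_prod Y V"
  by (auto simp: subsp_prod_def)

lemma subsp_prod_basis: "subsp_prod (basis_el ` B) (basis_el ` A) = basis_el ` setprod B A"
proof
  show "subsp_prod (basis_el ` B) (basis_el ` A) \<subseteq> basis_el ` setprod B A"
    unfolding subsp_prod_def setprod_def by (auto simp: basis_mult intro!: imageI) blast
  show "basis_el ` setprod B A \<subseteq> subsp_prod (basis_el ` B) (basis_el ` A)"
  proof
    fix u assume "u \<in> basis_el ` setprod B A"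
    then obtain b a where "b \<in> B" "a \<in> A" "u = basis_el (b * a)" by (auto simp: setprod_def)
    then show "u \<in> subsp_prod (basis_el ` B) (basis_el ` A)"
      unfolding subsp_prod_def by (auto simp: basis_mult[symmetric])
  qed
qed

definition nrm :: "('a::finite \<Rightarrow> complex) \<Rightarrow> real" where
  "nrm x = (\<Sum>g\<in>UNIV. cmod (x g))"

lemma swap3: "(\<Sum>g\<in>G. \<Sum>a\<in>A. \<Sum>b\<in>B. F g a b) = (\<Sum>a\<in>A. \<Sum>b\<in>B. \<Sum>g\<in>G. F g a b)"
proof -
  have "(\<Sum>g\<in>G. \<Sum>a\<in>A. \<Sum>b\<in>B. F g a b) = (\<Sum>a\<in>A. \<Sum>g\<in>G. \<Sum>b\<in>B. F g a b)"
    by (rule sum.swap)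
  also have "\<dots> = (\<Sum>a\<in>A. \<Sum>b\<in>B. \<Sum>g\<in>G. F g a b)"
    by (rule sum.cong[OF refl], rule sum.swap)
  finally show ?thesis .
qed

lemma nrm_mult: "nrm (malg_mult x v) \<le> nrm x * nrm v"
proof -
  have pt: "cmod (malg_mult x v g) \<le> (\<Sum>a\<in>UNIV. \<Sum>b\<in>UNIV. if a * b = g then cmod (x a) * cmod (v b) else 0)" for g
  proof -
    have "cmod (malg_mult x v g) \<le> (\<Sum>a\<in>UNIV. \<Sum>b\<in>UNIV. cmod (if a * b = g then x a * v b else 0))"
      unfolding malg_alt by (rule order_trans[OF norm_sum sum_mono[OF norm_sum]])
    also have "\<dots> = (\<Sum>a\<in>UNIV. \<Sum>b\<in>UNIV. if a * b = g then cmod (x a) * cmod (v b) else 0)"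
      by (intro sum.cong refl) (simp add: norm_mult)
    finally show ?thesis .
  qed
  have "nrm (malg_mult x v) \<le> (\<Sum>g\<in>UNIV. \<Sum>a\<in>UNIV. \<Sum>b\<in>UNIV. if a * b = g then cmod (x a) * cmod (v b) else 0)"
    unfolding nrm_def by (rule sum_mono[OF pt])
  also have "\<dots> = (\<Sum>a\<in>UNIV. \<Sum>b\<in>UNIV. \<Sum>g\<in>UNIV. if a * b = g then cmod (x a) * cmod (v b) else 0)"
    by (rule swap3)
  also have "\<dots> = (\<Sum>a\<in>UNIV. \<Sum>b\<in>UNIV. cmod (x a) * cmod (v b))"
    by simp
  also have "\<dots> = nrm x * nrm v"
    by (simp add: nrm_def sum_product)
  finally show ?thesis .
qed

lemma nrm_zero: "nrm v \<le> 0 \<Longrightarrow> v = 0"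
proof -
  assume "nrm v \<le> 0"
  then have "nrm v = 0" using sum_nonneg[of UNIV "\<lambda>g. cmod (v g)"] by (simp add: nrm_def)
  then have "\<forall>g\<in>UNIV. cmod (v g) = 0" unfolding nrm_def by (subst (asm) sum_nonneg_eq_0_iff) auto
  then show "v = 0" by (auto intro!: ext)
qed

lemma nrm_scale: "nrm (cscale c v) = cmod c * nrm v"
  by (simp add: nrm_def cscale_def norm_mult sum_distrib_left)

lemma nrm_nonneg: "0 \<le> nrm v"
  unfolding nrm_def by (rule sum_nonneg) simp

interpretation fdp: finite_dimensional_vector_space_pair_1 "cscale :: complex \<Rightarrow> ('a::finite \<Rightarrow> complex) \<Rightarrow> 'a \<Rightarrow> complex" "range basis_el" "cscale :: complex \<Rightarrow> ('a::finite \<Rightarrow> complex) \<Rightarrow> 'a \<Rightarrow> complex"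
  by unfold_locales

lemma near_one: "\<exists>t. t \<noteq> 0 \<and> malg_invertible (malg_one + cscale t x)"
proof -
  define r where "r = nrm x"
  have r0: "0 \<le> r" unfolding r_def by (rule nrm_nonneg)
  define t where "t = complex_of_real (1 / (2 * (r + 1)))"
  have t0: "t \<noteq> 0" unfolding t_def of_real_eq_0_iff using r0 by simp
  have nt: "cmod t = 1 / (2 * (r + 1))" unfolding t_def norm_of_real using r0 by simp
  have ct: "cmod t * r \<le> 1 / 2" unfolding nt using r0 by (simp add: field_simps)
  define z where "z = malg_one + cscale t x"
  have zv: "malg_mult z v = v + cscale t (malg_mult x v)" for v
    by (simp add: z_def malg_add_left one_left malg_scale_left)
  have ker: "v = 0" if "malg_mult z v = 0" for v
  proof -
    have "v = cscale (- t) (malg_mult x v)"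
      using that zv[of v] by (auto simp: cscale_def fun_eq_iff add_eq_0_iff)
    then have "nrm v = cmod t * nrm (malg_mult x v)" by (metis nrm_scale norm_minus_cancel)
    also have "\<dots> \<le> cmod t * (r * nrm v)"
      using nrm_mult[of x v] by (intro mult_left_mono) (auto simp: r_def)
    also have "\<dots> \<le> 1/2 * nrm v"
      using mult_right_mono[OF ct nrm_nonneg[of v]] by (simp only: mult.assoc)
    finally show "v = 0" using nrm_nonneg[of v] by (intro nrm_zero) simp
  qed
  have inj: "inj (malg_mult z)"
  proof (rule injI)
    fix a b assume "malg_mult z a = malg_mult z b"
    then have "malg_mult z (a - b) = 0" by (simp add: malg_diff_right)
    then show "a = b" using ker by fastforce
  qed
  have "surj (malg_mult z)"
    using fd.linear_inj_imp_surj[OF lin_right inj] .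
  then obtain y where y: "malg_mult z y = malg_one" by (metis surjD)
  have "malg_mult z (malg_mult y z) = malg_mult z malg_one"
    by (simp add: malg_assoc[symmetric] y one_left one_right)
  then have "malg_mult y z = malg_one" using inj by (simp add: inj_eq)
  then have "malg_invertible z" using y unfolding malg_invertible_def by blast
  then show ?thesis using t0 unfolding z_def by blast
qed

lemma tr_inj: "malg_mult z y = malg_one \<Longrightarrow> inj (malg_mult y)"
  by (rule injI) (metis malg_assoc one_left)

lemma tr_dim: "malg_mult z y = malg_one \<Longrightarrow> cf.dim ((malg_mult y) ` W) = cf.dim W"
  by (rule fdp.dim_image_eq[OF lin_right]) (auto intro: inj_on_subset[OF tr_inj])

lemma tr_span: "cf.span ((malg_mult y) ` T) = (malg_mult y) ` cf.span T"
  by (rule module_hom.span_image[OF module_hom_linearI[OF lin_right]])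

lemma tr_subspace: "cf.subspace W \<Longrightarrow> cf.subspace ((malg_mult y) ` W)"
  by (rule module_hom.subspace_image[OF module_hom_linearI[OF lin_right]])

lemma tr_prod: "subsp_prod ((malg_mult y) ` W) V = (malg_mult y) ` (subsp_prod W V)"
proof
  show "subsp_prod ((malg_mult y) ` W) V \<subseteq> (malg_mult y) ` (subsp_prod W V)"
    by (auto simp: subsp_prod_def malg_assoc intro!: imageI) blast
  show "(malg_mult y) ` (subsp_prod W V) \<subseteq> subsp_prod ((malg_mult y) ` W) V"
  proof
    fix u assume "u \<in> (malg_mult y) ` (subsp_prod W V)"
    then obtain w v where "w \<in> W" "v \<in> V" "u = malg_mult y (malg_mult w v)"
      by (auto simp: subsp_prod_def)
    then show "u \<in> subsp_prod ((malg_mult y) ` W) V"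
      unfolding subsp_prod_def by (auto simp: malg_assoc[symmetric])
  qed
qed

lemma conn_tr: "malg_mult z y = malg_one \<Longrightarrow> conn V lam ((malg_mult y) ` W) = conn V lam W"
  unfolding conn_def tr_prod tr_span by (simp add: tr_dim)

lemma inv_mult: "malg_invertible a \<Longrightarrow> malg_invertible b \<Longrightarrow> malg_invertible (malg_mult a b)"
  unfolding malg_invertible_def
proof (elim exE conjE)
  fix a' b' assume "malg_mult a a' = malg_one" "malg_mult a' a = malg_one" "malg_mult b b' = malg_one" "malg_mult b' b = malg_one"
  then show "\<exists>y. malg_mult (malg_mult a b) y = malg_one \<and> malg_mult y (malg_mult a b) = malg_one"
    by (intro exI[of _ "malg_mult b' a'"]) (metis malg_assoc one_left)
qed

lemma one_inv: "malg_invertible malg_one"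
  unfolding malg_invertible_def by (metis one_left)

lemma dim_le: "cf.dim (S :: ('m::finite \<Rightarrow> complex) set) \<le> card (UNIV :: 'm set)"
proof -
  have "cf.dim S \<le> cf.dim (UNIV :: ('m \<Rightarrow> complex) set)" by (rule fd.dim_subset) simp
  also have "\<dots> = card (range (basis_el :: 'm \<Rightarrow> _))" by (rule fd.dim_UNIV)
  also have "\<dots> = card (UNIV :: 'm set)" by (rule card_image[OF basis_inj])
  finally show ?thesis .
qed

lemma conn_lb: fixes V :: "('m::{monoid_mult,finite} \<Rightarrow> complex) set"
  shows "0 \<le> lam \<Longrightarrow> - lam * real (card (UNIV :: 'm set)) \<le> conn V lam W"
proof -
  assume l: "0 \<le> lam"
  have "lam * real (cf.dim W) \<le> lam * real (card (UNIV :: 'm set))"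
    using dim_le[of W] l by (intro mult_left_mono) auto
  then show ?thesis unfolding conn_def by simp
qed

lemma kappa_le: fixes V :: "('m::{monoid_mult,finite} \<Rightarrow> complex) set"
  shows "0 \<le> lam \<Longrightarrow> admissible W \<Longrightarrow> kappa V lam \<le> conn V lam W"
  unfolding kappa_def
  by (rule cInf_lower) (auto intro!: bdd_belowI[of _ "- lam * real (card (UNIV :: 'm set))"] conn_lb)

lemma UNIV_adm: "admissible UNIV"
  unfolding admissible_def using one_inv by auto

lemma kappa_att: fixes V :: "('m::{monoid_mult,finite} \<Rightarrow> complex) set"
  shows "\<exists>W. fragment V lam W"
proof -
  define S where "S = {conn V lam W |W. admissible W}"
  define N where "N = card (UNIV :: 'm set)"
  have "S \<subseteq> (\<lambda>(a, b). real a - lam * real b) ` ({..N} \<times> {..N})"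
  proof
    fix c assume "c \<in> S"
    then obtain W where c: "c = conn V lam W" by (auto simp: S_def)
    have "cf.dim (cf.span (subsp_prod W V)) \<le> N" "cf.dim W \<le> N"
      unfolding N_def by (rule dim_le)+
    then show "c \<in> (\<lambda>(a, b). real a - lam * real b) ` ({..N} \<times> {..N})"
      unfolding c conn_def by (auto intro!: image_eqI[of _ _ "(cf.dim (cf.span (subsp_prod W V)), cf.dim W)"])
  qed
  then have fin: "finite S" by (rule finite_subset) auto
  have ne: "S \<noteq> {}" using UNIV_adm by (auto simp: S_def)
  have "Inf S \<in> S" using cInf_eq_Min[OF fin ne] Min_in[OF fin ne] by simp
  then show ?thesis by (auto simp: S_def fragment_def kappa_def)
qed

lemma submod:
  assumes X: "fragment V lam X" and Y: "fragment V lam Y" and XY: "admissible (X \<inter> Y)" and lam: "0 \<le> lam"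
  shows "fragment V lam (X \<inter> Y)"
proof -
  have sX: "cf.subspace X" and sY: "cf.subspace Y" using X Y by (auto simp: fragment_def admissible_def)
  define S where "S = cf.span (X \<union> Y)"
  have "S = {x + y |x y. x \<in> X \<and> y \<in> Y}"
    unfolding S_def cf.span_Un cf.span_eq_iff[THEN iffD2, OF sX] cf.span_eq_iff[THEN iffD2, OF sY] ..
  then have dS: "cf.dim S + cf.dim (X \<inter> Y) = cf.dim X + cf.dim Y"
    using fd.dim_sums_Int[OF sX sY] by simp
  define P where "P = cf.span (subsp_prod X V)"
  define Q where "Q = cf.span (subsp_prod Y V)"
  have sP: "cf.subspace P" and sQ: "cf.subspace Q" by (auto simp: P_def Q_def)
  have "cf.span (P \<union> Q) = {x + y |x y. x \<in> P \<and> y \<in> Q}"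
    unfolding cf.span_Un cf.span_eq_iff[THEN iffD2, OF sP] cf.span_eq_iff[THEN iffD2, OF sQ] ..
  then have dPQ: "cf.dim (cf.span (P \<union> Q)) + cf.dim (P \<inter> Q) = cf.dim P + cf.dim Q"
    using fd.dim_sums_Int[OF sP sQ] by simp
  have "subsp_prod S V \<subseteq> subsp_prod (cf.span (X \<union> Y)) (cf.span V)"
    unfolding S_def by (intro subsp_prod_mono cf.span_superset order_refl)
  also have "\<dots> \<subseteq> cf.span (subsp_prod (X \<union> Y) V)" by (rule prod_span)
  also have "\<dots> = cf.span (subsp_prod X V \<union> subsp_prod Y V)" by (simp add: subsp_prod_Un)
  also have "\<dots> \<subseteq> cf.span (P \<union> Q)" unfolding P_def Q_def
    by (intro cf.span_mono Un_mono cf.span_superset)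
  finally have "cf.span (subsp_prod S V) \<subseteq> cf.span (P \<union> Q)"
    by (intro cf.span_minimal) auto
  then have d1: "cf.dim (cf.span (subsp_prod S V)) \<le> cf.dim (cf.span (P \<union> Q))"
    by (rule fd.dim_subset)
  have "cf.span (subsp_prod (X \<inter> Y) V) \<subseteq> P \<inter> Q"
  proof -
    have "cf.span (subsp_prod (X \<inter> Y) V) \<subseteq> P" unfolding P_def by (intro cf.span_mono subsp_prod_mono) auto
    moreover have "cf.span (subsp_prod (X \<inter> Y) V) \<subseteq> Q" unfolding Q_def by (intro cf.span_mono subsp_prod_mono) auto
    ultimately show ?thesis by blast
  qed
  then have d2: "cf.dim (cf.span (subsp_prod (X \<inter> Y) V)) \<le> cf.dim (P \<inter> Q)"
    by (rule fd.dim_subset)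
  have "conn V lam S + conn V lam (X \<inter> Y) \<le> conn V lam X + conn V lam Y"
  proof -
    have n: "cf.dim (cf.span (subsp_prod S V)) + cf.dim (cf.span (subsp_prod (X \<inter> Y) V)) \<le> cf.dim P + cf.dim Q"
      using d1 d2 dPQ by linarith
    have "real (cf.dim S) + real (cf.dim (X \<inter> Y)) = real (cf.dim X) + real (cf.dim Y)"
      using dS by (metis of_nat_add)
    then have e: "lam * real (cf.dim S) + lam * real (cf.dim (X \<inter> Y)) = lam * real (cf.dim X) + lam * real (cf.dim Y)"
      by (metis distrib_left)
    have "real (cf.dim (cf.span (subsp_prod S V))) + real (cf.dim (cf.span (subsp_prod (X \<inter> Y) V))) \<le> real (cf.dim P) + real (cf.dim Q)"
      using n by (metis of_nat_add of_nat_le_iff)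
    then show ?thesis unfolding conn_def P_def Q_def using e by linarith
  qed
  moreover have "admissible S"
    using X unfolding fragment_def admissible_def S_def by (auto intro: cf.span_base)
  ultimately have "conn V lam (X \<inter> Y) \<le> kappa V lam"
  proof -
    assume a1: "conn V lam S + conn V lam (X \<inter> Y) \<le> conn V lam X + conn V lam Y" and a2: "admissible S"
    have "kappa V lam \<le> conn V lam S" by (rule kappa_le[OF lam a2])
    moreover have "conn V lam X = kappa V lam" "conn V lam Y = kappa V lam" using X Y by (auto simp: fragment_def)
    ultimately show ?thesis using a1 by linarith
  qed
  then have "conn V lam (X \<inter> Y) = kappa V lam" using kappa_le[OF lam XY, of V] by linarith
  then show ?thesis using XY by (simp add: fragment_def)
qed

lemma sub_int: "cf.subspace X \<Longrightarrow> cf.subspace Y \<Longrightarrow> cf.subspace (X \<inter> Y)"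
  unfolding cf.subspace_def by auto

lemma frag_tr:
  assumes W: "fragment V lam W" and y: "malg_invertible y"
  shows "fragment V lam ((malg_mult y) ` W) \<and> cf.dim ((malg_mult y) ` W) = cf.dim W"
proof -
  obtain z where zy: "malg_mult z y = malg_one" using y unfolding malg_invertible_def by blast
  obtain x where x: "x \<in> W" "malg_invertible x" using W unfolding fragment_def admissible_def by blast
  have "admissible ((malg_mult y) ` W)"
    unfolding admissible_def using W x inv_mult[OF y x(2)]
    by (auto simp: fragment_def admissible_def intro: tr_subspace)
  then show ?thesis using W conn_tr[OF zy] tr_dim[OF zy] by (simp add: fragment_def)
qed

lemma atom_exists: "\<exists>H. atom V lam H \<and> malg_one \<in> H"
proof -
  obtain W0 where "fragment V lam W0" using kappa_att by blast
  then obtain W where W: "fragment V lam W" and min: "\<forall>W'. fragment V lam W' \<longrightarrow> cf.dim W \<le> cf.dim W'"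
    using ex_has_least_nat[of "fragment V lam" W0 "cf.dim"] by blast
  obtain x where x: "x \<in> W" "malg_invertible x" using W unfolding fragment_def admissible_def by blast
  obtain y where y: "malg_mult x y = malg_one" "malg_mult y x = malg_one" using x(2) unfolding malg_invertible_def by blast
  have yi: "malg_invertible y" using y unfolding malg_invertible_def by blast
  have "atom V lam ((malg_mult y) ` W)"
    using frag_tr[OF W yi] min by (simp add: atom_def)
  moreover have "malg_one \<in> (malg_mult y) ` W" using x(1) y(2) by (metis imageI)
  ultimately show ?thesis by blast
qed

lemma atom_unique:
  assumes lam: "0 \<le> lam" and H1: "atom V lam H1" "malg_one \<in> H1" and H2: "atom V lam H2" "malg_one \<in> H2"
  shows "H1 = H2"
proof -
  have s1: "cf.subspace H1" and s2: "cf.subspace H2"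
    using H1 H2 by (auto simp: atom_def fragment_def admissible_def)
  have adm: "admissible (H1 \<inter> H2)" unfolding admissible_def using H1 H2 one_inv sub_int[OF s1 s2] by blast
  have fr: "fragment V lam (H1 \<inter> H2)" using submod[OF _ _ adm lam] H1 H2 by (simp add: atom_def)
  have "H1 \<inter> H2 = H1"
    by (rule fd.subspace_dim_equal[OF sub_int[OF s1 s2] s1]) (use H1 fr in \<open>auto simp: atom_def\<close>)
  moreover have "H1 \<inter> H2 = H2"
    by (rule fd.subspace_dim_equal[OF sub_int[OF s1 s2] s2]) (use H2 fr in \<open>auto simp: atom_def\<close>)
  ultimately show ?thesis by simp
qed

lemma atom_inv:
  assumes lam: "0 \<le> lam" and H: "atom V lam H" "malg_one \<in> H" and h: "h \<in> H" "malg_invertible h"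
  shows "(malg_mult h) ` H \<subseteq> H"
proof -
  have sH: "cf.subspace H" using H by (auto simp: atom_def fragment_def admissible_def)
  have FH: "fragment V lam H" using H by (simp add: atom_def)
  define T where "T = (malg_mult h) ` H"
  have T: "fragment V lam T" "cf.dim T = cf.dim H" using frag_tr[OF FH h(2)] by (auto simp: T_def)
  have sT: "cf.subspace T" using T by (auto simp: fragment_def admissible_def)
  have "h \<in> T" unfolding T_def using H(2) one_right[of h] by (metis imageI)
  then have adm: "admissible (H \<inter> T)" unfolding admissible_def using h sub_int[OF sH sT] by blast
  have fr: "fragment V lam (H \<inter> T)" using submod[OF FH T(1) adm lam] .
  have "H \<inter> T = H"
    by (rule fd.subspace_dim_equal[OF sub_int[OF sH sT] sH]) (use H fr in \<open>auto simp: atom_def\<close>)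
  then have "H \<subseteq> T" by blast
  then have "H = T" using fd.subspace_dim_equal[OF sH sT] T(2) by simp
  then show ?thesis unfolding T_def by simp
qed

lemma atom_subalg:
  assumes lam: "0 \<le> lam" and H: "atom V lam H" "malg_one \<in> H"
  shows "subalgebra H"
proof -
  have sH: "cf.subspace H" using H by (auto simp: atom_def fragment_def admissible_def)
  have "malg_mult x y \<in> H" if x: "x \<in> H" and y: "y \<in> H" for x y
  proof -
    obtain t where t: "t \<noteq> 0" "malg_invertible (malg_one + cscale t x)" using near_one by blast
    define z where "z = malg_one + cscale t x"
    have zH: "z \<in> H" unfolding z_def using sH H(2) x by (intro cf.subspace_add cf.subspace_scale) auto
    have zy: "malg_mult z y \<in> H" using atom_inv[OF lam H zH t(2)[folded z_def]] y by blast
    have "malg_mult z y = y + cscale t (malg_mult x y)"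
      by (simp add: z_def malg_add_left one_left malg_scale_left)
    then have "malg_mult x y = cscale (1 / t) (malg_mult z y - y)"
      using t(1) by (auto simp: cscale_def fun_eq_iff)
    also have "\<dots> \<in> H" using sH zy y by (intro cf.subspace_scale cf.subspace_diff) auto
    finally show ?thesis .
  qed
  then show ?thesis using sH H(2) by (simp add: subalgebra_def)
qed

lemma one_Hl: "malg_one \<in> Hl A"
  unfolding Hl_def by (auto simp: one_left intro: cf.span_base)

lemma atom_Hl:
  assumes lam: "0 < lam" and H: "atom (cf.span (basis_el ` A)) lam H" "malg_one \<in> H"
  shows "Hl A \<subseteq> H"
proof -
  define V where "V = cf.span (basis_el ` A)"
  define K where "K = Hl A"
  have sH: "cf.subspace H" using H by (auto simp: atom_def fragment_def admissible_def)
  have FH: "fragment V lam H" using H by (simp add: atom_def V_def)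
  define W where "W = cf.span (subsp_prod H K)"
  have HK: "subsp_prod H K \<subseteq> W" unfolding W_def by (rule cf.span_superset)
  have HW: "H \<subseteq> W"
  proof
    fix h assume "h \<in> H"
    then have "malg_mult h malg_one \<in> subsp_prod H K" using one_Hl unfolding K_def subsp_prod_def by blast
    then show "h \<in> W" using HK one_right[of h] by auto
  qed
  have "subsp_prod (subsp_prod H K) (basis_el ` A) \<subseteq> subsp_prod H V"
  proof
    fix u assume "u \<in> subsp_prod (subsp_prod H K) (basis_el ` A)"
    then obtain h k a where hk: "h \<in> H" "k \<in> K" "a \<in> A" "u = malg_mult (malg_mult h k) (basis_el a)"
      unfolding subsp_prod_def by blast
    then have "malg_mult k (basis_el a) \<in> V" unfolding K_def Hl_def V_def by blast
    then show "u \<in> subsp_prod H V" unfolding subsp_prod_def using hk by (auto simp: malg_assoc)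
  qed
  then have "cf.span (subsp_prod W V) \<subseteq> cf.span (subsp_prod H V)"
    unfolding W_def V_def span_prod_span by (rule cf.span_mono)
  moreover have "cf.span (subsp_prod H V) \<subseteq> cf.span (subsp_prod W V)"
    using HW by (intro cf.span_mono subsp_prod_mono) auto
  ultimately have eqs: "cf.span (subsp_prod W V) = cf.span (subsp_prod H V)" by blast
  have "malg_one \<in> W" using HW H(2) by blast
  then have admW: "admissible W" unfolding admissible_def W_def using one_inv by auto
  have "conn V lam H \<le> conn V lam W"
    using kappa_le[OF _ admW, of lam V] lam FH by (simp add: fragment_def)
  then have "lam * real (cf.dim W) \<le> lam * real (cf.dim H)" unfolding conn_def eqs by simp
  then have "cf.dim W \<le> cf.dim H" using lam by simp
  then have "H = W" using fd.subspace_dim_equal[OF sH _ HW] by (simp add: W_def)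
  show "Hl A \<subseteq> H"
  proof
    fix k assume "k \<in> Hl A"
    then have "malg_mult malg_one k \<in> subsp_prod H K" using H(2) unfolding K_def subsp_prod_def by blast
    then show "k \<in> H" using HK \<open>H = W\<close> one_left[of k] by auto
  qed
qed

lemma unit_inv: "b \<in> units_M \<Longrightarrow> malg_invertible (basis_el b)"
proof -
  assume "b \<in> units_M"
  then obtain v where v: "b * v = 1" "v * b = 1" unfolding units_M_def by blast
  show ?thesis unfolding malg_invertible_def malg_one_def
    by (rule exI[of _ "basis_el v"]) (simp add: basis_mult v)
qed

lemma atom_bound:
  assumes lam: "0 \<le> lam" and H: "atom (cf.span (basis_el ` A)) lam H" "malg_one \<in> H"
    and B: "B \<inter> units_M \<noteq> {}"
  shows "real (card (setprod B A)) \<ge> real (card A) + lam * real (card B) - lam * real (cf.dim H)"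
proof -
  define V where "V = cf.span (basis_el ` A)"
  have FH: "fragment V lam H" using H by (simp add: atom_def V_def)
  define W where "W = cf.span (basis_el ` B)"
  obtain b where b: "b \<in> B" "b \<in> units_M" using B by blast
  have admW: "admissible W" unfolding admissible_def W_def
    using unit_inv[OF b(2)] b(1) by (auto intro: cf.span_base)
  have "cf.span (subsp_prod W V) = cf.span (basis_el ` setprod B A)"
    unfolding W_def V_def span_prod_span subsp_prod_basis ..
  then have cW: "conn V lam W = real (card (setprod B A)) - lam * real (card B)"
    unfolding conn_def W_def by (simp add: dim_basis[unfolded cf.dim_span])
  have "V \<subseteq> cf.span (subsp_prod H V)"
  proof
    fix v assume "v \<in> V"
    then have "malg_mult malg_one v \<in> subsp_prod H V" using H(2) unfolding subsp_prod_def by blast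
    then show "v \<in> cf.span (subsp_prod H V)" using one_left[of v] cf.span_superset by auto
  qed
  then have "cf.dim V \<le> cf.dim (cf.span (subsp_prod H V))" by (rule fd.dim_subset)
  then have "card A \<le> cf.dim (cf.span (subsp_prod H V))" unfolding V_def dim_basis .
  then have "real (card A) - lam * real (cf.dim H) \<le> conn V lam H" unfolding conn_def by simp
  also have "\<dots> = kappa V lam" using FH by (simp add: fragment_def)
  also have "\<dots> \<le> conn V lam W" by (rule kappa_le[OF lam admW])
  finally show ?thesis unfolding cW by simp
qed

lemma atom_stab:
  assumes lam: "0 < lam" and H: "atom (cf.span (basis_el ` A)) lam H" "malg_one \<in> H"
  shows "real (cf.dim H) \<ge> real (card (stab_left A))"
proof -
  have "basis_el ` stab_left A \<subseteq> Hl A"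
  proof
    fix u assume "u \<in> basis_el ` stab_left A"
    then obtain h where h0: "u = basis_el h" "h \<in> stab_left A" by blast
    then have h: "u = basis_el h" "(\<lambda>a. h * a) ` A = A" unfolding stab_left_def by simp_all
    show "u \<in> Hl A"
      unfolding Hl_def h(1) mem_Collect_eq
    proof (rule ballI)
      fix a assume "a \<in> A"
      then have "h * a \<in> (\<lambda>a. h * a) ` A" by (rule imageI)
      then have "h * a \<in> A" using h(2) by simp
      then have "basis_el (h * a) \<in> cf.span (basis_el ` A)" by (intro cf.span_base imageI)
      then show "malg_mult (basis_el h) (basis_el a) \<in> cf.span (basis_el ` A)"
        by (simp only: basis_mult)
    qed
  qed
  also have "\<dots> \<subseteq> H" by (rule atom_Hl[OF lam H])
  finally have "card (basis_el ` stab_left A) \<le> cf.dim H"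
    by (rule fd.independent_card_le_dim[OF _ indep_basis])
  moreover have "card (basis_el ` stab_left A) = card (stab_left A)"
    by (rule card_image, rule inj_on_subset[OF basis_inj], simp)
  ultimately show ?thesis by simp
qed

theorem theorem7p2:
  fixes A :: "'m::{monoid_mult,finite} set" and lam :: real
  assumes "A \<inter> units_M \<noteq> {}"
    and "0 < lam" and "lam \<le> 1"
  defines "V \<equiv> cf.span (basis_el ` A)"
  shows "(\<exists>!H. atom V lam H \<and> malg_one \<in> H) \<and>
    (\<forall>H. atom V lam H \<and> malg_one \<in> H \<longrightarrow>
       subalgebra H \<and> Hl A \<subseteq> H \<and>
       (\<forall>B::'m set. B \<inter> units_M \<noteq> {} \<longrightarrow>
          real (card (setprod B A)) \<ge> real (card A) + lam * real (card B) - lam * real (cf.dim H)) \<and>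
       real (cf.dim H) \<ge> real (card (stab_left A)))"
proof -
  have l0: "0 \<le> lam" using assms(2) by simp
  have ex: "\<exists>!H. atom V lam H \<and> malg_one \<in> H"
    using atom_exists[of V lam] atom_unique[OF l0] by blast
  have all: "subalgebra H \<and> Hl A \<subseteq> H \<and>
       (\<forall>B::'m set. B \<inter> units_M \<noteq> {} \<longrightarrow>
          real (card (setprod B A)) \<ge> real (card A) + lam * real (card B) - lam * real (cf.dim H)) \<and>
       real (cf.dim H) \<ge> real (card (stab_left A))" if H: "atom V lam H" "malg_one \<in> H" for H
  proof (intro conjI allI impI)
    show "subalgebra H" by (rule atom_subalg[OF l0 H])
    show "Hl A \<subseteq> H" by (rule atom_Hl[OF assms(2) H[unfolded V_def]])
    show "real (card (setprod B A)) \<ge> real (card A) + lam * real (card B) - lam * real (cf.dim H)"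
      if "B \<inter> units_M \<noteq> {}" for B
      by (rule atom_bound[OF l0 H[unfolded V_def] that])
    show "real (cf.dim H) \<ge> real (card (stab_left A))" by (rule atom_stab[OF assms(2) H[unfolded V_def]])
  qed
  show ?thesis using ex all by blast
qed

end
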